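(* Let $G$ be a finite abelian group, $\mathcal M=(M,\preceq)$ a $\hat G$-linear monoid with partial order satisfying conditions (1)–(3) below, and $k$ a field. Then the extension of scalars functor $-\otimes k:\mathrm{Rep}(M,\hat G)\to k[M]\text{-}\mathrm{mod}$ restricts to a functor $-\otimes k:\mathrm{Rep}(\mathcal M,\hat G)\to k[\mathcal M]\text{-}\mathrm{mod}$.
   Context: $\hat G=G\sqcup\{0\}$ with $0$ absorbing. $\mathrm{Vect}_{\hat G}$: objects are finite pointed sets with an action of $\hat G$ ($0v=0$, $g0=0$) such that $G$ acts freely on nonzero elements; morphisms $f$ satisfy $f(0)=0$, $f(gv)=gf(v)$, $f(v_1)=f(v_2)\neq0\Rightarrow Gv_1=Gv_2$. A $\hat G$-linear monoid is a finite monoid $M$ with absorbing element $0_M$ containing $G$ as a subgroup of units commuting with all of $M$, with $G$ acting freely by translation on $M\setminus\{0_M\}$. $\mathrm{Rep}(M,\hat G)$: objects $V$ of $\mathrm{Vect}_{\hat G}$ with an action $a\mapsto V(a)$ of $M$ by morphisms of $\mathrm{Vect}_{\hat G}$, $0_M$ acting as zero and $g\in G$ as scalar $g$. On $\mathrm{End}_{\hat G}(V)$: $A\le B$ iff for all $x$, $Ax\neq0\Rightarrow Bx=Ax$. $\preceq$ is a partial order on $M$ with: (1) $0_M$ the unique minimal element; (2) whenever $\bigvee_{a\in I}a$ exists, $x(\bigvee a)=\bigvee xa$ and $(\bigvee a)x=\bigvee ax$ for all $x$; (3) the same for meets. $\mathrm{Rep}(\mathcal M,\hat G)$ is the full subcategory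 of $V\in\mathrm{Rep}(M,\hat G)$ such that whenever $\bigvee_{a\in I}a$ exists in $M$, $\bigvee_{a\in I}V(a)$ exists in $\mathrm{End}_{\hat G}(V)$ and equals $V(\bigvee_{a\in I}a)$. A complete system of orthogonal idempotents is a finite set $E=\{e_1,\dots,e_m\}\subseteq M$ with $e_ie_j=\delta_{ij}e_j$ and $1=\bigvee_i e_i$; $\mathcal C(M)$ is the set of these. $k[M]$ is the monoid algebra and $k[\mathcal M]=k[M]/(a-\sum_{e\in E}ae,\ a-\sum_{e\in E}ea\mid a\in M, E\in\mathcal C(M))$. For $V\in\mathrm{Rep}(M,\hat G)$, $V\otimes k$ is the $k$-vector space with basis $V\setminus\{0\}$, on which $a\in M$ acts by $v\mapsto av$ if $av\neq0$ and $v\mapsto0$ otherwise, and morphisms are extended linearly in the same way. *)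

theory Defs
  imports "HOL-Algebra.Group"
begin

definition hatG_linear_monoid :: "('m, 'b) monoid_scheme \<Rightarrow> 'm set \<Rightarrow> 'm \<Rightarrow> bool" where
  "hatG_linear_monoid M G z \<longleftrightarrow>
     monoid M \<and> finite (carrier M) \<and>
     z \<in> carrier M \<and> (\<forall>x\<in>carrier M. z \<otimes>\<^bsub>M\<^esub> x = z \<and> x \<otimes>\<^bsub>M\<^esub> z = z) \<and>
     G \<subseteq> carrier M \<and> comm_group (M\<lparr>carrier := G\<rparr>) \<and>
     (\<forall>g\<in>G. \<forall>x\<in>carrier M. g \<otimes>\<^bsub>M\<^esub> x = x \<otimes>\<^bsub>M\<^esub> g) \<and>
     (\<forall>g\<in>G. \<forall>x\<in>carrier M - {z}. g \<otimes>\<^bsub>M\<^esub> x = x \<longrightarrow> g = \<one>\<^bsub>M\<^esub>)"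

definition po_lub :: "('a \<Rightarrow> 'a \<Rightarrow> bool) \<Rightarrow> 'a set \<Rightarrow> 'a set \<Rightarrow> 'a \<Rightarrow> bool" where
  "po_lub leq S I a \<longleftrightarrow> a \<in> S \<and> (\<forall>i\<in>I. leq i a) \<and>
     (\<forall>b\<in>S. (\<forall>i\<in>I. leq i b) \<longrightarrow> leq a b)"

definition po_glb :: "('a \<Rightarrow> 'a \<Rightarrow> bool) \<Rightarrow> 'a set \<Rightarrow> 'a set \<Rightarrow> 'a \<Rightarrow> bool" where
  "po_glb leq S I a \<longleftrightarrow> a \<in> S \<and> (\<forall>i\<in>I. leq a i) \<and>
     (\<forall>b\<in>S. (\<forall>i\<in>I. leq b i) \<longrightarrow> leq b a)"

definition ordered_monoid_ok :: "('m, 'b) monoid_scheme \<Rightarrow> 'm \<Rightarrow> ('m \<Rightarrow> 'm \<Rightarrow> bool) \<Rightarrow> bool" where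
  "ordered_monoid_ok M z leq \<longleftrightarrow>
     (\<forall>x\<in>carrier M. leq x x) \<and>
     (\<forall>x\<in>carrier M. \<forall>y\<in>carrier M. leq x y \<and> leq y x \<longrightarrow> x = y) \<and>
     (\<forall>x\<in>carrier M. \<forall>y\<in>carrier M. \<forall>w\<in>carrier M. leq x y \<and> leq y w \<longrightarrow> leq x w) \<and>
     \<comment> \<open>(1) z is the unique minimal element\<close>
     (\<forall>m\<in>carrier M. (\<forall>y\<in>carrier M. leq y m \<longrightarrow> y = m) \<longleftrightarrow> m = z) \<and>
     \<comment> \<open>(2) multiplication distributes over existing joins\<close>
     (\<forall>I a. I \<subseteq> carrier M \<longrightarrow> po_lub leq (carrier M) I a \<longrightarrow>
        (\<forall>x\<in>carrier M. po_lub leq (carrier M) ((\<lambda>i. x \<otimes>\<^bsub>M\<^esub> i) ` I) (x \<otimes>\<^bsub>M\<^esub> a) \<and>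
                        po_lub leq (carrier M) ((\<lambda>i. i \<otimes>\<^bsub>M\<^esub> x) ` I) (a \<otimes>\<^bsub>M\<^esub> x))) \<and>
     \<comment> \<open>(3) multiplication distributes over existing meets\<close>
     (\<forall>I a. I \<subseteq> carrier M \<longrightarrow> po_glb leq (carrier M) I a \<longrightarrow>
        (\<forall>x\<in>carrier M. po_glb leq (carrier M) ((\<lambda>i. x \<otimes>\<^bsub>M\<^esub> i) ` I) (x \<otimes>\<^bsub>M\<^esub> a) \<and>
                        po_glb leq (carrier M) ((\<lambda>i. i \<otimes>\<^bsub>M\<^esub> x) ` I) (a \<otimes>\<^bsub>M\<^esub> x)))"

text \<open>An object of Rep(M, hat G): a finite pointed set (V, v0) with an action
act of M. The hat-G-action on V is the restriction of act to G \<union> {z}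
(g \<in> G acts as scalar g, z acts as zero).\<close>

definition is_hatG_end :: "('m, 'b) monoid_scheme \<Rightarrow> 'm set \<Rightarrow> 'v set \<Rightarrow> 'v \<Rightarrow>
    ('m \<Rightarrow> 'v \<Rightarrow> 'v) \<Rightarrow> ('v \<Rightarrow> 'v) \<Rightarrow> bool" where
  "is_hatG_end M G V v0 act f \<longleftrightarrow>
     (\<forall>v\<in>V. f v \<in> V) \<and> f v0 = v0 \<and>
     (\<forall>g\<in>G. \<forall>v\<in>V. f (act g v) = act g (f v)) \<and>
     (\<forall>v1\<in>V. \<forall>v2\<in>V. f v1 = f v2 \<and> f v1 \<noteq> v0 \<longrightarrow>
         {act g v1 | g. g \<in> G} = {act g v2 | g. g \<in> G})"

definition is_rep :: "('m, 'b) monoid_scheme \<Rightarrow> 'm set \<Rightarrow> 'm \<Rightarrow> 'v set \<Rightarrow> 'v \<Rightarrow>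
    ('m \<Rightarrow> 'v \<Rightarrow> 'v) \<Rightarrow> bool" where
  "is_rep M G z V v0 act \<longleftrightarrow>
     finite V \<and> v0 \<in> V \<and>
     (\<forall>a\<in>carrier M. \<forall>v\<in>V. act a v \<in> V) \<and>
     (\<forall>v\<in>V. act \<one>\<^bsub>M\<^esub> v = v) \<and>
     (\<forall>a\<in>carrier M. \<forall>b\<in>carrier M. \<forall>v\<in>V. act (a \<otimes>\<^bsub>M\<^esub> b) v = act a (act b v)) \<and>
     (\<forall>v\<in>V. act z v = v0) \<and>
     (\<forall>a\<in>carrier M. act a v0 = v0) \<and>
     (\<forall>g\<in>G. \<forall>v\<in>V - {v0}. act g v = v \<longrightarrow> g = \<one>\<^bsub>M\<^esub>) \<and>
     (\<forall>a\<in>carrier M. is_hatG_end M G V v0 act (act a))"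

definition end_le :: "'v set \<Rightarrow> 'v \<Rightarrow> ('v \<Rightarrow> 'v) \<Rightarrow> ('v \<Rightarrow> 'v) \<Rightarrow> bool" where
  "end_le V v0 A B \<longleftrightarrow> (\<forall>x\<in>V. A x \<noteq> v0 \<longrightarrow> B x = A x)"

text \<open>Objects of Rep(\<M>, hat G): whenever the join of I exists in M (and equals a),
the join of the V(i), i \<in> I, exists in End_hatG(V) and equals V(a); equivalently
V(a) is a least upper bound of the V(i) in End_hatG(V).\<close>
definition is_rep_ord :: "('m, 'b) monoid_scheme \<Rightarrow> 'm set \<Rightarrow> 'm \<Rightarrow> ('m \<Rightarrow> 'm \<Rightarrow> bool) \<Rightarrow>
    'v set \<Rightarrow> 'v \<Rightarrow> ('m \<Rightarrow> 'v \<Rightarrow> 'v) \<Rightarrow> bool" where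
  "is_rep_ord M G z leq V v0 act \<longleftrightarrow>
     is_rep M G z V v0 act \<and>
     (\<forall>I a. I \<subseteq> carrier M \<longrightarrow> po_lub leq (carrier M) I a \<longrightarrow>
        (\<forall>i\<in>I. end_le V v0 (act i) (act a)) \<and>
        (\<forall>B. is_hatG_end M G V v0 act B \<longrightarrow>
             (\<forall>i\<in>I. end_le V v0 (act i) B) \<longrightarrow> end_le V v0 (act a) B))"

definition complete_orth_idem :: "('m, 'b) monoid_scheme \<Rightarrow> 'm \<Rightarrow> ('m \<Rightarrow> 'm \<Rightarrow> bool) \<Rightarrow> 'm set \<Rightarrow> bool" where
  "complete_orth_idem M z leq E \<longleftrightarrow>
     finite E \<and> E \<subseteq> carrier M \<and>
     (\<forall>e1\<in>E. \<forall>e2\<in>E. e1 \<otimes>\<^bsub>M\<^esub> e2 = (if e1 = e2 then e2 else z)) \<and>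
     po_lub leq (carrier M) E \<one>\<^bsub>M\<^esub>"

text \<open>Vectors of V \<otimes> k: functions V \<rightarrow> k supported on the basis V - {v0}.\<close>
definition tens_vecs :: "'v set \<Rightarrow> 'v \<Rightarrow> ('v \<Rightarrow> 'k::field) set" where
  "tens_vecs V v0 = {x. \<forall>w. w \<notin> V - {v0} \<longrightarrow> x w = 0}"

text \<open>Linear action of a \<in> M on V \<otimes> k: basis vector v \<mapsto> a v if a v \<noteq> 0, else 0.\<close>
definition tens_act :: "'v set \<Rightarrow> 'v \<Rightarrow> ('m \<Rightarrow> 'v \<Rightarrow> 'v) \<Rightarrow> 'm \<Rightarrow> ('v \<Rightarrow> 'k::field) \<Rightarrow> 'v \<Rightarrow> 'k" where
  "tens_act V v0 act a x w =
     (if w \<in> V - {v0} then (\<Sum>v\<in>{v\<in>V - {v0}. act a v = w}. x v) else 0)"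

text \<open>V \<otimes> k is a k[\<M>]-module: the k[M]-action annihilates the generators
a - \<Sum>_{e\<in>E} a e and a - \<Sum>_{e\<in>E} e a of the defining ideal of k[\<M>].\<close>
definition is_kMord_module :: "('m, 'b) monoid_scheme \<Rightarrow> 'm \<Rightarrow> ('m \<Rightarrow> 'm \<Rightarrow> bool) \<Rightarrow>
    'v set \<Rightarrow> 'v \<Rightarrow> ('m \<Rightarrow> 'v \<Rightarrow> 'v) \<Rightarrow> 'k::field itself \<Rightarrow> bool" where
  "is_kMord_module M z leq V v0 act _ \<longleftrightarrow>
     (\<forall>a\<in>carrier M. \<forall>E. complete_orth_idem M z leq E \<longrightarrow>
        (\<forall>x::'v \<Rightarrow> 'k. x \<in> tens_vecs V v0 \<longrightarrow>
           tens_act V v0 act a x = (\<lambda>w. \<Sum>e\<in>E. tens_act V v0 act (a \<otimes>\<^bsub>M\<^esub> e) x w) \<and>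
           tens_act V v0 act a x = (\<lambda>w. \<Sum>e\<in>E. tens_act V v0 act (e \<otimes>\<^bsub>M\<^esub> a) x w)))"

end

theory Submission
  imports Defs
begin

lemma idem_unique:
  assumes hM: "hatG_linear_monoid M G z"
    and R: "is_rep_ord M G z leq V v0 act"
    and E: "complete_orth_idem M z leq E"
    and v: "v \<in> V" "v \<noteq> v0"
  shows "\<exists>e0\<in>E. act e0 v = v \<and> (\<forall>e\<in>E. e \<noteq> e0 \<longrightarrow> act e v = v0)"
proof -
  have mon: "monoid M" and zc: "z \<in> carrier M" using hM unfolding hatG_linear_monoid_def by auto
  have one: "\<one>\<^bsub>M\<^esub> \<in> carrier M" using mon by (simp add: monoid.one_closed)
  have rep: "is_rep M G z V v0 act" using R unfolding is_rep_ord_def by auto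
  have Ef: "finite E" and Ec: "E \<subseteq> carrier M"
    and orth: "\<forall>e1\<in>E. \<forall>e2\<in>E. e1 \<otimes>\<^bsub>M\<^esub> e2 = (if e1 = e2 then e2 else z)"
    and lub: "po_lub leq (carrier M) E \<one>\<^bsub>M\<^esub>"
    using E unfolding complete_orth_idem_def by auto
  have R2: "(\<forall>i\<in>E. end_le V v0 (act i) (act \<one>\<^bsub>M\<^esub>)) \<and>
        (\<forall>B. is_hatG_end M G V v0 act B \<longrightarrow>
             (\<forall>i\<in>E. end_le V v0 (act i) B) \<longrightarrow> end_le V v0 (act \<one>\<^bsub>M\<^esub>) B)"
    using R Ec lub unfolding is_rep_ord_def by blast
  have id1: "\<And>u. u \<in> V \<Longrightarrow> act \<one>\<^bsub>M\<^esub> u = u" using rep unfolding is_rep_def by auto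
  have actV: "\<And>a u. a \<in> carrier M \<Longrightarrow> u \<in> V \<Longrightarrow> act a u \<in> V" using rep unfolding is_rep_def by auto
  have act0: "\<And>a. a \<in> carrier M \<Longrightarrow> act a v0 = v0" using rep unfolding is_rep_def by auto
  have actz: "\<And>u. u \<in> V \<Longrightarrow> act z u = v0" using rep unfolding is_rep_def by auto
  have v0V: "v0 \<in> V" using rep unfolding is_rep_def by auto
  have actm: "\<And>a b u. a \<in> carrier M \<Longrightarrow> b \<in> carrier M \<Longrightarrow> u \<in> V \<Longrightarrow> act (a \<otimes>\<^bsub>M\<^esub> b) u = act a (act b u)"
    using rep unfolding is_rep_def by auto
  have Gc: "G \<subseteq> carrier M" using hM unfolding hatG_linear_monoid_def by auto
  have equi: "\<And>a g u. a \<in> carrier M \<Longrightarrow> g \<in> G \<Longrightarrow> u \<in> V \<Longrightarrow> act a (act g u) = act g (act a u)"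
    using rep unfolding is_rep_def is_hatG_end_def by auto
  have fixe: "\<And>e u. e \<in> E \<Longrightarrow> u \<in> V \<Longrightarrow> act e u \<noteq> v0 \<Longrightarrow> act e u = u"
    using R2 id1 unfolding end_le_def by metis
  define B where "B = (\<lambda>y. if \<forall>e\<in>E. act e y = v0 then v0 else y)"
  have Bend: "is_hatG_end M G V v0 act B"
    unfolding is_hatG_end_def
  proof (intro conjI ballI allI impI)
    fix u assume "u \<in> V" thus "B u \<in> V" using v0V unfolding B_def by auto
  next
    show "B v0 = v0" unfolding B_def by auto
  next
    fix g u assume g: "g \<in> G" and u: "u \<in> V"
    have gc: "g \<in> carrier M" using g Gc by auto
    show "B (act g u) = act g (B u)"
    proof (cases "\<forall>e\<in>E. act e u = v0")
      case True
      have "\<forall>e\<in>E. act e (act g u) = v0"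
      proof
        fix e assume e: "e \<in> E"
        then have "act e (act g u) = act g (act e u)" using equi Ec g u by auto
        then show "act e (act g u) = v0" using True e act0 gc by simp
      qed
      then show ?thesis using True act0 gc unfolding B_def by auto
    next
      case False
      then obtain e where e: "e \<in> E" "act e u \<noteq> v0" by auto
      then have "act e u = u" using fixe u by auto
      moreover have "act e (act g u) = act g (act e u)" using equi e Ec g u by blast
      ultimately have "act e (act g u) = act g u" by simp
      then show ?thesis using False e unfolding B_def by auto
    qed
  next
    fix v1 v2 assume "v1 \<in> V" "v2 \<in> V" "B v1 = B v2 \<and> B v1 \<noteq> v0"
    then have "v1 = v2" unfolding B_def by (auto split: if_splits)
    then show "{act g v1 |g. g \<in> G} = {act g v2 |g. g \<in> G}" by simp
  qed
  have "\<forall>i\<in>E. end_le V v0 (act i) B"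
    unfolding end_le_def
  proof (intro ballI impI)
    fix i u assume i: "i \<in> E" and u: "u \<in> V" and ne: "act i u \<noteq> v0"
    then have "act i u = u" using fixe by auto
    then show "B u = act i u" using i ne unfolding B_def by (auto intro!: bexI[of _ i])
  qed
  then have "end_le V v0 (act \<one>\<^bsub>M\<^esub>) B" using R2 Bend by blast
  then have "B v = v" using v id1 unfolding end_le_def by auto
  then obtain e0 where e0: "e0 \<in> E" "act e0 v \<noteq> v0" using v unfolding B_def by (auto split: if_splits)
  then have e0v: "act e0 v = v" using fixe v by auto
  have "\<forall>e\<in>E. e \<noteq> e0 \<longrightarrow> act e v = v0"
  proof (intro ballI impI, rule ccontr)
    fix e assume e: "e \<in> E" "e \<noteq> e0" "act e v \<noteq> v0"
    then have ev: "act e v = v" using fixe v by auto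
    have "act (e \<otimes>\<^bsub>M\<^esub> e0) v = v0" using orth e e0 actz v by auto
    moreover have "act (e \<otimes>\<^bsub>M\<^esub> e0) v = act e (act e0 v)" using actm e(1) e0(1) Ec v(1) by blast
    then have "act (e \<otimes>\<^bsub>M\<^esub> e0) v = v" using ev e0v by simp
    ultimately show False using v by auto
  qed
  then show ?thesis using e0 e0v by auto
qed

lemma sum_idem:
  assumes hM: "hatG_linear_monoid M G z"
    and R: "is_rep_ord M G z leq V v0 act"
    and E: "complete_orth_idem M z leq E"
    and v: "v \<in> V" "v \<noteq> v0"
    and P0: "\<not> P v0"
  shows "(\<Sum>e\<in>E. (if P (act e v) then c else 0)) = (if P v then c else (0::'k::field))"
proof -
  obtain e0 where e0: "e0 \<in> E" "act e0 v = v" "\<forall>e\<in>E. e \<noteq> e0 \<longrightarrow> act e v = v0"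
    using idem_unique[OF hM R E v] by blast
  have Ef: "finite E" using E unfolding complete_orth_idem_def by auto
  have "(\<Sum>e\<in>E. (if P (act e v) then c else 0)) = (if P (act e0 v) then c else 0)
        + (\<Sum>e\<in>E - {e0}. (if P (act e v) then c else 0))"
    using sum.remove[OF Ef e0(1)] by blast
  also have "(\<Sum>e\<in>E - {e0}. (if P (act e v) then c else 0)) = 0"
    using e0(3) P0 by (intro sum.neutral) auto
  finally show ?thesis using e0 by simp
qed

theorem mainTheorem16:
  fixes M :: "('m, 'b) monoid_scheme" and G :: "'m set" and z :: 'm
    and leq :: "'m \<Rightarrow> 'm \<Rightarrow> bool"
    and V :: "'v set" and v0 :: 'v and act :: "'m \<Rightarrow> 'v \<Rightarrow> 'v"
  assumes "hatG_linear_monoid M G z"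
    and "ordered_monoid_ok M z leq"
    and "is_rep_ord M G z leq V v0 act"
  shows "is_kMord_module M z leq V v0 act TYPE('k::field)"
  unfolding is_kMord_module_def
proof (intro ballI allI impI conjI)
  fix a E and x :: "'v \<Rightarrow> 'k"
  assume a: "a \<in> carrier M" and E: "complete_orth_idem M z leq E" and x: "x \<in> tens_vecs V v0"
  have rep: "is_rep M G z V v0 act" using assms(3) unfolding is_rep_ord_def by auto
  have fV: "finite V" using rep unfolding is_rep_def by auto
  have act0: "\<And>a. a \<in> carrier M \<Longrightarrow> act a v0 = v0" using rep unfolding is_rep_def by auto
  have actV: "\<And>a u. a \<in> carrier M \<Longrightarrow> u \<in> V \<Longrightarrow> act a u \<in> V" using rep unfolding is_rep_def by auto
  have actm: "\<And>a b u. a \<in> carrier M \<Longrightarrow> b \<in> carrier M \<Longrightarrow> u \<in> V \<Longrightarrow> act (a \<otimes>\<^bsub>M\<^esub> b) u = act a (act b u)"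
    using rep unfolding is_rep_def by auto
  have Ec: "E \<subseteq> carrier M" using E unfolding complete_orth_idem_def by auto
  define S where "S = V - {v0}"
  have fS: "finite S" using fV unfolding S_def by auto
  have TA: "\<And>b w. tens_act V v0 act b x w = (if w \<in> S then (\<Sum>v\<in>S. if act b v = w then x v else 0) else 0)"
  proof -
    fix b w
    have "sum x {v \<in> V - {v0}. act b v = w} = (\<Sum>v\<in>S. if act b v = w then x v else 0)"
      unfolding S_def by (rule sum.inter_filter) (use fV in simp)
    then show "tens_act V v0 act b x w = (if w \<in> S then (\<Sum>v\<in>S. if act b v = w then x v else 0) else 0)"
      unfolding tens_act_def S_def by simp
  qed
  show "tens_act V v0 act a x = (\<lambda>w. \<Sum>e\<in>E. tens_act V v0 act (a \<otimes>\<^bsub>M\<^esub> e) x w)"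
  proof (rule ext)
    fix w
    show "tens_act V v0 act a x w = (\<Sum>e\<in>E. tens_act V v0 act (a \<otimes>\<^bsub>M\<^esub> e) x w)"
    proof (cases "w \<in> S")
      case False then show ?thesis unfolding TA by simp
    next
      case True
      have "(\<Sum>e\<in>E. tens_act V v0 act (a \<otimes>\<^bsub>M\<^esub> e) x w)
          = (\<Sum>e\<in>E. \<Sum>v\<in>S. if act (a \<otimes>\<^bsub>M\<^esub> e) v = w then x v else 0)"
        unfolding TA using True by simp
      also have "\<dots> = (\<Sum>v\<in>S. \<Sum>e\<in>E. if act (a \<otimes>\<^bsub>M\<^esub> e) v = w then x v else 0)"
        by (rule sum.swap)
      also have "\<dots> = (\<Sum>v\<in>S. if act a v = w then x v else 0)"
      proof (rule sum.cong[OF refl])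
        fix v assume v: "v \<in> S"
        have "(\<Sum>e\<in>E. if act (a \<otimes>\<^bsub>M\<^esub> e) v = w then x v else 0)
            = (\<Sum>e\<in>E. if (\<lambda>u. act a u = w) (act e v) then x v else 0)"
          using actm a Ec v unfolding S_def by (intro sum.cong) auto
        also have "\<dots> = (if act a v = w then x v else 0)"
          using sum_idem[OF assms(1) assms(3) E, of v "\<lambda>u. act a u = w"] v True act0 a
          unfolding S_def by auto
        finally show "(\<Sum>e\<in>E. if act (a \<otimes>\<^bsub>M\<^esub> e) v = w then x v else 0)
            = (if act a v = w then x v else 0)" .
      qed
      finally show ?thesis unfolding TA using True by simp
    qed
  qed
  show "tens_act V v0 act a x = (\<lambda>w. \<Sum>e\<in>E. tens_act V v0 act (e \<otimes>\<^bsub>M\<^esub> a) x w)"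
  proof (rule ext)
    fix w
    show "tens_act V v0 act a x w = (\<Sum>e\<in>E. tens_act V v0 act (e \<otimes>\<^bsub>M\<^esub> a) x w)"
    proof (cases "w \<in> S")
      case False then show ?thesis unfolding TA by simp
    next
      case True
      have "(\<Sum>e\<in>E. tens_act V v0 act (e \<otimes>\<^bsub>M\<^esub> a) x w)
          = (\<Sum>e\<in>E. \<Sum>v\<in>S. if act (e \<otimes>\<^bsub>M\<^esub> a) v = w then x v else 0)"
        unfolding TA using True by simp
      also have "\<dots> = (\<Sum>v\<in>S. \<Sum>e\<in>E. if act (e \<otimes>\<^bsub>M\<^esub> a) v = w then x v else 0)"
        by (rule sum.swap)
      also have "\<dots> = (\<Sum>v\<in>S. if act a v = w then x v else 0)"
      proof (rule sum.cong[OF refl])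
        fix v assume v: "v \<in> S"
        have avV: "act a v \<in> V" using actV a v unfolding S_def by auto
        have eq1: "(\<Sum>e\<in>E. if act (e \<otimes>\<^bsub>M\<^esub> a) v = w then x v else 0)
            = (\<Sum>e\<in>E. if act e (act a v) = w then x v else 0)"
          using actm a Ec v unfolding S_def by (intro sum.cong) auto
        show "(\<Sum>e\<in>E. if act (e \<otimes>\<^bsub>M\<^esub> a) v = w then x v else 0)
            = (if act a v = w then x v else 0)"
        proof (cases "act a v = v0")
          case True
          then have "(\<Sum>e\<in>E. if act e (act a v) = w then x v else 0) = 0"
            using act0 Ec \<open>w \<in> S\<close> unfolding S_def by (intro sum.neutral) auto
          then show ?thesis using eq1 True \<open>w \<in> S\<close> unfolding S_def by auto
        next
          case False
          then show ?thesis using eq1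
            sum_idem[OF assms(1) assms(3) E avV False, of "\<lambda>u. u = w" "x v"] \<open>w \<in> S\<close>
            unfolding S_def by auto
        qed
      qed
      finally show ?thesis unfolding TA using True by simp
    qed
  qed
qed

end
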